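(* The logic $\mathsf{wPL}$ is locally tabular but not uniformly locally tabular.
   Context: $\mathsf{wPL}=\mathsf{IPC}\oplus (q\to p)\vee\big(((p\to q)\to p)\to p\big)$ (Weak Peirce's Law). A logic $L$ is locally tabular if over each finite set of variables there are finitely many formulas up to $L$-equivalence; it is $n$-uniform if every formula is $L$-equivalent to one of implication depth $\le n$ (atoms/constants depth $0$, $\wedge,\vee$ take maximum, $d(\varphi\to\psi)=\max(d(\varphi),d(\psi))+1$); uniformly locally tabular if $n$-uniform for some $n$. *)

theory Defs
  imports Main
begin

datatype fm = Var nat | Bot | Top | Conj fm fm | Disj fm fm | Imp fm fm

fun vars :: "fm \<Rightarrow> nat set" where
  "vars (Var n) = {n}"
| "vars Bot = {}"
| "vars Top = {}"
| "vars (Conj a b) = vars a \<union> vars b"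
| "vars (Disj a b) = vars a \<union> vars b"
| "vars (Imp a b) = vars a \<union> vars b"

fun idepth :: "fm \<Rightarrow> nat" where
  "idepth (Var n) = 0"
| "idepth Bot = 0"
| "idepth Top = 0"
| "idepth (Conj a b) = max (idepth a) (idepth b)"
| "idepth (Disj a b) = max (idepth a) (idepth b)"
| "idepth (Imp a b) = max (idepth a) (idepth b) + 1"

fun subst :: "(nat \<Rightarrow> fm) \<Rightarrow> fm \<Rightarrow> fm" where
  "subst s (Var n) = s n"
| "subst s Bot = Bot"
| "subst s Top = Top"
| "subst s (Conj a b) = Conj (subst s a) (subst s b)"
| "subst s (Disj a b) = Disj (subst s a) (subst s b)"
| "subst s (Imp a b) = Imp (subst s a) (subst s b)"

text \<open>Since IPC is
  given by axiom schemata, closure under substitution amounts to adding all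
  substitution instances of the extra axioms.\<close>
inductive derivable :: "fm set \<Rightarrow> fm \<Rightarrow> bool" for Ax :: "fm set" where
  ax1: "derivable Ax (Imp A (Imp B A))"
| ax2: "derivable Ax (Imp (Imp A (Imp B C)) (Imp (Imp A B) (Imp A C)))"
| ax3: "derivable Ax (Imp (Conj A B) A)"
| ax4: "derivable Ax (Imp (Conj A B) B)"
| ax5: "derivable Ax (Imp A (Imp B (Conj A B)))"
| ax6: "derivable Ax (Imp A (Disj A B))"
| ax7: "derivable Ax (Imp B (Disj A B))"
| ax8: "derivable Ax (Imp (Imp A C) (Imp (Imp B C) (Imp (Disj A B) C)))"
| ax9: "derivable Ax (Imp Bot A)"
| axTop: "derivable Ax Top"
| extra: "\<phi> \<in> Ax \<Longrightarrow> derivable Ax (subst s \<phi>)"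
| mp: "derivable Ax (Imp A B) \<Longrightarrow> derivable Ax A \<Longrightarrow> derivable Ax B"

definition wPL_axiom :: fm where
  "wPL_axiom = (let p = Var 0; q = Var 1 in
     Disj (Imp q p) (Imp (Imp (Imp p q) p) p))"

definition wPL :: "fm \<Rightarrow> bool" where
  "wPL = derivable {wPL_axiom}"

definition equiv_in :: "(fm \<Rightarrow> bool) \<Rightarrow> fm \<Rightarrow> fm \<Rightarrow> bool" where
  "equiv_in L a b \<longleftrightarrow> L (Imp a b) \<and> L (Imp b a)"

definition locally_tabular :: "(fm \<Rightarrow> bool) \<Rightarrow> bool" where
  "locally_tabular L \<longleftrightarrow>
     (\<forall>V. finite V \<longrightarrow>
        finite ({a. vars a \<subseteq> V} // {(a, b). vars a \<subseteq> V \<and> vars b \<subseteq> V \<and> equiv_in L a b}))"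

definition n_uniform :: "(fm \<Rightarrow> bool) \<Rightarrow> nat \<Rightarrow> bool" where
  "n_uniform L n \<longleftrightarrow> (\<forall>a. \<exists>b. idepth b \<le> n \<and> equiv_in L a b)"

definition uniformly_locally_tabular :: "(fm \<Rightarrow> bool) \<Rightarrow> bool" where
  "uniformly_locally_tabular L \<longleftrightarrow> (\<exists>n. n_uniform L n)"

end

theory Submission
  imports Defs
begin

abbreviation L where "L \<equiv> derivable {wPL_axiom}"

inductive ded :: "fm set \<Rightarrow> fm \<Rightarrow> bool" for G where
  dasm: "a \<in> G \<Longrightarrow> ded G a"
| dthm: "L a \<Longrightarrow> ded G a"
| dmp: "ded G (Imp a b) \<Longrightarrow> ded G a \<Longrightarrow> ded G b"

lemma L_id: "L (Imp a a)"
proof -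
  have 1: "L (Imp (Imp a (Imp (Imp a a) a)) (Imp (Imp a (Imp a a)) (Imp a a)))" by (rule ax2)
  have 2: "L (Imp a (Imp (Imp a a) a))" by (rule ax1)
  have 3: "L (Imp (Imp a (Imp a a)) (Imp a a))" using mp[OF 1 2] .
  show ?thesis using mp[OF 3 ax1] .
qed

lemma ded_mono: "ded G a \<Longrightarrow> G \<subseteq> H \<Longrightarrow> ded H a"
  by (induction rule: ded.induct) (auto intro: ded.intros)

lemma deduction: "ded (insert a G) b \<Longrightarrow> ded G (Imp a b)"
proof (induction rule: ded.induct)
  case (dasm c)
  then show ?case
  proof
    assume "c = a" thus ?thesis using L_id ded.dthm by simp
  next
    assume "c \<in> G" thus ?thesis by (meson ax1 ded.dasm ded.dmp ded.dthm)
  qed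
next
  case (dthm c) thus ?case by (meson ax1 ded.dmp ded.dthm)
next
  case (dmp c d)
  have "ded G (Imp (Imp a (Imp c d)) (Imp (Imp a c) (Imp a d)))" by (rule ded.dthm[OF ax2])
  then show ?case using dmp.IH by (meson ded.dmp)
qed

lemma ded_empty: "ded {} a \<Longrightarrow> L a"
  by (induction rule: ded.induct) (auto intro: mp)

definition closed_th where "closed_th G \<longleftrightarrow> (\<forall>a. ded G a \<longrightarrow> a \<in> G)"
definition prime_th where
  "prime_th G \<longleftrightarrow> closed_th G \<and> Bot \<notin> G \<and> (\<forall>a b. Disj a b \<in> G \<longrightarrow> a \<in> G \<or> b \<in> G)"

lemma chain_ded:
  assumes "ded (\<Union>C) c" "C \<noteq> {}" "\<forall>x\<in>C. \<forall>y\<in>C. x \<subseteq> y \<or> y \<subseteq> x"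
  shows "\<exists>D\<in>C. ded D c"
  using assms
proof (induction rule: ded.induct)
  case (dasm a) thus ?case by (auto intro: ded.dasm)
next
  case (dthm a) thus ?case by (auto intro: ded.dthm)
next
  case (dmp a b)
  then obtain D1 D2 where "D1 \<in> C" "D2 \<in> C" "ded D1 (Imp a b)" "ded D2 a" by blast
  then show ?case using dmp.prems(2)
    by (metis ded.dmp ded_mono)
qed

lemma lindenbaum:
  assumes "\<not> ded G c"
  shows "\<exists>D. G \<subseteq> D \<and> prime_th D \<and> c \<notin> D"
proof -
  define A where "A = {D. G \<subseteq> D \<and> \<not> ded D c}"
  have "\<exists>M\<in>A. \<forall>X\<in>A. M \<subseteq> X \<longrightarrow> X = M"
  proof (rule subset_Zorn_nonempty)
    show "A \<noteq> {}" using assms A_def by auto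
  next
    fix C assume C: "C \<noteq> {}" "subset.chain A C"
    then have ch: "C \<subseteq> A" "\<forall>x\<in>C. \<forall>y\<in>C. x \<subseteq> y \<or> y \<subseteq> x"
      by (auto simp: subset.chain_def)
    have "\<not> ded (\<Union>C) c"
      using chain_ded[OF _ C(1) ch(2)] ch(1) A_def by blast
    moreover have "G \<subseteq> \<Union>C" using C(1) ch(1) A_def by blast
    ultimately show "\<Union>C \<in> A" using A_def by blast
  qed
  then obtain M where M: "G \<subseteq> M" "\<not> ded M c" and mx: "\<And>X. G \<subseteq> X \<Longrightarrow> \<not> ded X c \<Longrightarrow> M \<subseteq> X \<Longrightarrow> X = M"
    using A_def by auto
  have ins: "ded (insert a M) c" if "a \<notin> M" for a
    using mx[of "insert a M"] M that by auto
  have cl: "closed_th M"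
    unfolding closed_th_def
  proof (intro allI impI)
    fix a assume "ded M a"
    show "a \<in> M"
    proof (rule ccontr)
      assume "a \<notin> M"
      then have "ded M (Imp a c)" using ins deduction by blast
      then show False using \<open>ded M a\<close> M(2) ded.dmp by blast
    qed
  qed
  have "Bot \<notin> M" using M(2) ded.dasm ded.dmp ded.dthm[OF ax9] by blast
  moreover have "a \<in> M \<or> b \<in> M" if "Disj a b \<in> M" for a b
  proof (rule ccontr)
    assume "\<not> (a \<in> M \<or> b \<in> M)"
    then have "ded M (Imp a c)" "ded M (Imp b c)" using ins deduction by blast+
    moreover have "ded M (Imp (Imp a c) (Imp (Imp b c) (Imp (Disj a b) c)))" by (rule ded.dthm[OF ax8])
    ultimately have "ded M c" using that by (meson ded.dasm ded.dmp)
    then show False using M(2) by blast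
  qed
  ultimately have "prime_th M" using cl prime_th_def by blast
  moreover have "c \<notin> M" using M(2) ded.dasm by blast
  ultimately show ?thesis using M(1) by blast
qed

lemma prime_ded: "prime_th G \<Longrightarrow> ded G a \<Longrightarrow> a \<in> G"
  by (simp add: prime_th_def closed_th_def)

lemma prime_L: "prime_th G \<Longrightarrow> L a \<Longrightarrow> a \<in> G"
  by (simp add: prime_ded ded.dthm)

lemma prime_mp: "prime_th G \<Longrightarrow> Imp a b \<in> G \<Longrightarrow> a \<in> G \<Longrightarrow> b \<in> G"
  by (meson prime_ded ded.dasm ded.dmp)

lemma prime_top: "prime_th G \<Longrightarrow> Top \<in> G"
  by (simp add: prime_L axTop)

lemma prime_bot: "prime_th G \<Longrightarrow> Bot \<notin> G"
  by (simp add: prime_th_def)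

lemma prime_conj: "prime_th G \<Longrightarrow> Conj a b \<in> G \<longleftrightarrow> a \<in> G \<and> b \<in> G"
  by (meson prime_L prime_mp ax3 ax4 ax5)

lemma prime_disj: "prime_th G \<Longrightarrow> Disj a b \<in> G \<longleftrightarrow> a \<in> G \<or> b \<in> G"
  by (meson prime_L prime_mp ax6 ax7 prime_th_def)

lemma prime_imp: "prime_th G \<Longrightarrow> Imp a b \<in> G \<longleftrightarrow> (\<forall>H. prime_th H \<longrightarrow> G \<subseteq> H \<longrightarrow> a \<in> H \<longrightarrow> b \<in> H)"
proof
  assume "prime_th G" "Imp a b \<in> G"
  then show "\<forall>H. prime_th H \<longrightarrow> G \<subseteq> H \<longrightarrow> a \<in> H \<longrightarrow> b \<in> H" using prime_mp by blast
next
  assume G: "prime_th G" and H: "\<forall>H. prime_th H \<longrightarrow> G \<subseteq> H \<longrightarrow> a \<in> H \<longrightarrow> b \<in> H"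
  show "Imp a b \<in> G"
  proof (rule ccontr)
    assume "Imp a b \<notin> G"
    then have "\<not> ded (insert a G) b" using G deduction prime_ded by blast
    then obtain D where "insert a G \<subseteq> D" "prime_th D" "b \<notin> D" using lindenbaum by blast
    then show False using H by blast
  qed
qed

lemma wpl_inst: "L (Disj (Imp q p) (Imp (Imp (Imp p q) p) p))"
proof -
  have "L (subst (\<lambda>n. if n = 0 then p else q) wPL_axiom)" by (rule extra) simp
  then show ?thesis by (simp add: wPL_axiom_def Let_def)
qed

lemma canon_C:
  assumes pr: "prime_th r" "prime_th x" "prime_th z" "prime_th w"
  and "r \<subseteq> x" "r \<subseteq> z" "z \<subseteq> w" "\<not> w \<subseteq> z" "\<not> z \<subseteq> x"
  shows "x \<subseteq> w"
proof (rule ccontr)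
  assume "\<not> x \<subseteq> w"
  then obtain d where d: "d \<in> x" "d \<notin> w" by auto
  obtain b where b: "b \<in> z" "b \<notin> x" using assms by auto
  obtain c where c: "c \<in> w" "c \<notin> z" using assms by auto
  define p where "p = Conj b (Disj c (Imp c d))"
  have I: "Disj (Imp d p) (Imp (Imp (Imp p d) p) p) \<in> r" using wpl_inst prime_L pr(1) by blast
  have pz: "Imp (Imp p d) p \<in> z"
  proof (subst prime_imp[OF pr(3)], intro allI impI)
    fix H assume H: "prime_th H" "z \<subseteq> H" "Imp p d \<in> H"
    have "Imp c d \<in> H"
    proof (subst prime_imp[OF H(1)], intro allI impI)
      fix H' assume H': "prime_th H'" "H \<subseteq> H'" "c \<in> H'"
      have "p \<in> H'" unfolding p_def using H' H b prime_conj prime_disj by auto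
      then show "d \<in> H'" using prime_mp H' H by blast
    qed
    then show "p \<in> H" unfolding p_def using H b prime_conj prime_disj by auto
  qed
  have pnz: "p \<notin> z"
  proof
    assume "p \<in> z"
    then have "c \<in> z \<or> Imp c d \<in> z" unfolding p_def using pr(3) prime_conj prime_disj by blast
    then show False using c d assms(7) prime_mp pr(4) by blast
  qed
  have pnx: "p \<notin> x" unfolding p_def using b prime_conj pr(2) by auto
  from I pr(1) have "Imp d p \<in> r \<or> Imp (Imp (Imp p d) p) p \<in> r" using prime_disj by blast
  then show False
  proof
    assume "Imp d p \<in> r"
    then show False using assms(5) d pnx prime_mp pr(2) by blast
  next
    assume "Imp (Imp (Imp p d) p) p \<in> r"
    then show False using assms(6) pz pnz prime_mp pr(3) by blast
  qed
qed


definition Pu where "Pu u = {y. prime_th y \<and> u \<subseteq> y}"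
definition lev where "lev u y = {y' \<in> Pu u. y' = y \<or> (\<not> y \<subseteq> y' \<and> \<not> y' \<subseteq> y)}"
definition val where "val V y = {n \<in> V. Var n \<in> y}"
definition mm where "mm V u y = {n \<in> V. \<forall>y' \<in> lev u y. Var n \<in> y'}"
definition MM where "MM V u y = {n \<in> V. \<exists>y' \<in> lev u y. Var n \<in> y'}"
definition key where "key V u y = (mm V u y, MM V u y, val V y)"
definition kle where
  "kle k k' \<longleftrightarrow> k = k' \<or> ((fst k, fst (snd k)) \<noteq> (fst k', fst (snd k')) \<and> fst (snd k) \<subseteq> fst k')"
definition Img where "Img V u = key V u ` Pu u"

lemma lev_self: "y \<in> Pu u \<Longrightarrow> y \<in> lev u y"
  by (simp add: lev_def)

lemma mm_val: "y \<in> Pu u \<Longrightarrow> mm V u y \<subseteq> val V y"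
  using lev_self by (auto simp: mm_def val_def)

lemma val_MM: "y \<in> Pu u \<Longrightarrow> val V y \<subseteq> MM V u y"
  using lev_self by (auto simp: MM_def val_def)

lemma lev_mono:
  assumes u: "prime_th u" and y: "y \<in> Pu u" and v: "v \<in> Pu u" and yv: "y \<subseteq> v" "y \<noteq> v"
    and y': "y' \<in> lev u y" and v': "v' \<in> lev u v"
  shows "y' \<subseteq> v'"
proof -
  have P: "prime_th y" "prime_th v" "prime_th y'" "prime_th v'" "u \<subseteq> y" "u \<subseteq> v" "u \<subseteq> y'" "u \<subseteq> v'"
    using y v y' v' by (auto simp: Pu_def lev_def)
  have vy: "\<not> v \<subseteq> y" using yv by blast
  have y'v: "y' \<subseteq> v"
  proof (cases "y' = y")
    case True then show ?thesis using yv by simp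
  next
    case False
    then have "\<not> y \<subseteq> y'" using y' by (auto simp: lev_def)
    then show ?thesis using canon_C[OF u P(3) P(1) P(2) P(7) P(5) yv(1) vy] by blast
  qed
  show ?thesis
  proof (cases "v' = v")
    case True then show ?thesis using y'v by simp
  next
    case False
    then have v'inc: "\<not> v \<subseteq> v'" "\<not> v' \<subseteq> v" using v' by (auto simp: lev_def)
    have "y' \<noteq> v"
    proof
      assume "y' = v"
      then show False using y' yv by (auto simp: lev_def)
    qed
    then have "\<not> v \<subseteq> y'" using y'v by blast
    show ?thesis
    proof (rule ccontr)
      assume "\<not> y' \<subseteq> v'"
      then have "v' \<subseteq> v"
        using canon_C[OF u P(4) P(3) P(2) P(8) P(7) y'v \<open>\<not> v \<subseteq> y'\<close>] by blast
      then show False using v'inc by blast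
    qed
  qed
qed

lemma lev_eq:
  assumes u: "prime_th u" and y: "y \<in> Pu u" and v: "v \<in> Pu u" and inc: "\<not> y \<subseteq> v" "\<not> v \<subseteq> y"
  shows "lev u y \<subseteq> lev u v"
proof
  fix y' assume y': "y' \<in> lev u y"
  have P: "prime_th y" "prime_th v" "prime_th y'" "u \<subseteq> y" "u \<subseteq> v" "u \<subseteq> y'"
    using y v y' by (auto simp: Pu_def lev_def)
  show "y' \<in> lev u v"
  proof (cases "y' = y")
    case True then show ?thesis using y' inc by (auto simp: lev_def)
  next
    case False
    then have yi: "\<not> y \<subseteq> y'" "\<not> y' \<subseteq> y" using y' by (auto simp: lev_def)
    have "y' = v \<or> (\<not> v \<subseteq> y' \<and> \<not> y' \<subseteq> v)"
    proof (rule ccontr)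
      assume "\<not> ?thesis"
      then have "(y' \<subseteq> v \<and> \<not> v \<subseteq> y') \<or> (v \<subseteq> y' \<and> \<not> y' \<subseteq> v)" by blast
      then show False
      proof
        assume a: "y' \<subseteq> v \<and> \<not> v \<subseteq> y'"
        then show False using canon_C[OF u P(1) P(3) P(2) P(4) P(6) _ _ yi(2)] inc by blast
      next
        assume a: "v \<subseteq> y' \<and> \<not> y' \<subseteq> v"
        then show False using canon_C[OF u P(1) P(2) P(3) P(4) P(5) _ _ inc(2)] yi by blast
      qed
    qed
    then show ?thesis using y' by (auto simp: lev_def)
  qed
qed

lemma MM_mm:
  assumes u: "prime_th u" and y: "y \<in> Pu u" and v: "v \<in> Pu u" and yv: "y \<subseteq> v" "y \<noteq> v"
  shows "MM V u y \<subseteq> mm V u v"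
  using lev_mono[OF u y v yv] by (fastforce simp: MM_def mm_def)

lemma forth:
  assumes u: "prime_th u" and y: "y \<in> Pu u" and v: "v \<in> Pu u" and yv: "y \<subseteq> v"
  shows "kle (key V u y) (key V u v)"
proof (cases "y = v")
  case True then show ?thesis by (simp add: kle_def)
next
  case False
  have H: "MM V u y \<subseteq> mm V u v" using MM_mm[OF u y v yv False] .
  show ?thesis
  proof (cases "(mm V u y, MM V u y) = (mm V u v, MM V u v)")
    case True
    then have "val V y = val V v" using H mm_val[where V=V, OF y] val_MM[where V=V, OF y] mm_val[where V=V, OF v] val_MM[where V=V, OF v]
      by auto
    then show ?thesis using True by (simp add: kle_def key_def)
  next
    case False then show ?thesis using H by (simp add: kle_def key_def)
  qed
qed

lemma back_lem:
  assumes u: "prime_th u" and y: "y \<in> Pu u" and v: "v \<in> Pu u"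
    and k: "kle (key V u y) (key V u v)"
  shows "\<exists>v'\<in>Pu u. y \<subseteq> v' \<and> key V u v' = key V u v"
proof (cases "key V u y = key V u v")
  case True then show ?thesis using y by blast
next
  case False
  then have ne: "(mm V u y, MM V u y) \<noteq> (mm V u v, MM V u v)" and H: "MM V u y \<subseteq> mm V u v"
    using k by (auto simp: kle_def key_def)
  show ?thesis
  proof (cases "y \<subseteq> v")
    case True then show ?thesis using v by blast
  next
    case False
    note nyv = this
    show ?thesis
    proof (cases "v \<subseteq> y")
      case True
      then have "v \<noteq> y" using nyv by blast
      then have "MM V u v \<subseteq> mm V u y" using MM_mm[OF u v y True] by blast
      then have "(mm V u y, MM V u y) = (mm V u v, MM V u v)"
        using H mm_val[where V=V, OF y] val_MM[where V=V, OF y] mm_val[where V=V, OF v] val_MM[where V=V, OF v] by auto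
      then show ?thesis using ne by blast
    next
      case False
      then have "lev u y = lev u v" using lev_eq[OF u y v nyv False] lev_eq[OF u v y False nyv] by blast
      then have "(mm V u y, MM V u y) = (mm V u v, MM V u v)" by (simp add: mm_def MM_def)
      then show ?thesis using ne by blast
    qed
  qed
qed

lemma imp_dir:
  assumes u1: "prime_th u1" and u2: "prime_th u2" and I: "Img V u1 = Img V u2"
    and y1: "y1 \<in> Pu u1" and y2: "y2 \<in> Pu u2" and k: "key V u1 y1 = key V u2 y2"
    and IH: "\<And>z1 z2. z1 \<in> Pu u1 \<Longrightarrow> z2 \<in> Pu u2 \<Longrightarrow> key V u1 z1 = key V u2 z2 \<Longrightarrow>
        (a \<in> z1 \<longleftrightarrow> a \<in> z2) \<and> (b \<in> z1 \<longleftrightarrow> b \<in> z2)"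
    and ab: "Imp a b \<in> y2"
  shows "Imp a b \<in> y1"
proof (rule ccontr)
  assume "Imp a b \<notin> y1"
  moreover have py1: "prime_th y1" "u1 \<subseteq> y1" using y1 by (auto simp: Pu_def)
  ultimately obtain H where H: "prime_th H" "y1 \<subseteq> H" "a \<in> H" "b \<notin> H"
    using prime_imp by blast
  have HP: "H \<in> Pu u1" using H py1 by (auto simp: Pu_def)
  then have "key V u1 H \<in> Img V u2" using I by (metis Img_def imageI)
  then obtain H2 where H2: "H2 \<in> Pu u2" "key V u2 H2 = key V u1 H" by (auto simp: Img_def)
  have "kle (key V u1 y1) (key V u1 H)" using forth[OF u1 y1 HP H(2)] .
  then have "kle (key V u2 y2) (key V u2 H2)" using k H2 by simp
  then obtain H3 where H3: "H3 \<in> Pu u2" "y2 \<subseteq> H3" "key V u2 H3 = key V u2 H2"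
    using back_lem[OF u2 y2 H2(1)] by blast
  have "a \<in> H3" "b \<notin> H3" using IH[OF HP H3(1)] H3(3) H2(2) H by auto
  moreover have "prime_th H3" using H3 by (simp add: Pu_def)
  ultimately show False using ab H3(2) prime_mp by blast
qed

lemma type_agree:
  assumes u1: "prime_th u1" and u2: "prime_th u2" and I: "Img V u1 = Img V u2"
  shows "vars a \<subseteq> V \<Longrightarrow> y1 \<in> Pu u1 \<Longrightarrow> y2 \<in> Pu u2 \<Longrightarrow> key V u1 y1 = key V u2 y2
     \<Longrightarrow> (a \<in> y1 \<longleftrightarrow> a \<in> y2)"
proof (induction a arbitrary: y1 y2)
  case (Var n)
  then have "val V y1 = val V y2" by (simp add: key_def)
  then show ?case using Var by (auto simp: val_def)
next
  case Bot then show ?case by (auto simp: Pu_def prime_bot)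
next
  case Top then show ?case by (auto simp: Pu_def prime_top)
next
  case (Conj a b) then show ?case by (auto simp: Pu_def prime_conj)
next
  case (Disj a b) then show ?case by (auto simp: Pu_def prime_disj)
next
  case (Imp a b)
  have IH: "\<And>z1 z2. z1 \<in> Pu u1 \<Longrightarrow> z2 \<in> Pu u2 \<Longrightarrow> key V u1 z1 = key V u2 z2 \<Longrightarrow>
        (a \<in> z1 \<longleftrightarrow> a \<in> z2) \<and> (b \<in> z1 \<longleftrightarrow> b \<in> z2)" using Imp by simp
  have IH': "\<And>z1 z2. z1 \<in> Pu u2 \<Longrightarrow> z2 \<in> Pu u1 \<Longrightarrow> key V u2 z1 = key V u1 z2 \<Longrightarrow>
        (a \<in> z1 \<longleftrightarrow> a \<in> z2) \<and> (b \<in> z1 \<longleftrightarrow> b \<in> z2)" using IH by metis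
  show ?case
    using imp_dir[OF u1 u2 I Imp.prems(2,3,4) IH]
      imp_dir[OF u2 u1 I[symmetric] Imp.prems(3,2) Imp.prems(4)[symmetric] IH'] by blast
qed


definition TV where "TV V u = {a. vars a \<subseteq> V \<and> a \<in> u}"

lemma self_Pu: "prime_th u \<Longrightarrow> u \<in> Pu u" by (simp add: Pu_def)

lemma sig_TV:
  assumes "prime_th u1" "prime_th u2" "Img V u1 = Img V u2" "key V u1 u1 = key V u2 u2"
  shows "TV V u1 = TV V u2"
  using type_agree[OF assms(1,2,3) _ self_Pu[OF assms(1)] self_Pu[OF assms(2)] assms(4)]
  by (auto simp: TV_def)

lemma key_in: "key V u y \<in> Pow V \<times> Pow V \<times> Pow V"
  by (auto simp: key_def mm_def MM_def val_def)

lemma finite_TV: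
  assumes fin: "finite V"
  shows "finite (TV V ` {u. prime_th u})"
proof -
  define S where "S = (Pow V \<times> Pow V \<times> Pow V) \<times> Pow (Pow V \<times> Pow V \<times> Pow V)"
  define sig where "sig u = (key V u u, Img V u)" for u
  define g where "g s = TV V (SOME u. prime_th u \<and> sig u = s)" for s
  have finS: "finite S" using fin by (simp add: S_def)
  have "sig ` {u. prime_th u} \<subseteq> S"
  proof
    fix s assume "s \<in> sig ` {u. prime_th u}"
    then obtain u where "s = (key V u u, key V u ` Pu u)" by (auto simp: sig_def Img_def)
    moreover have "key V u ` Pu u \<subseteq> Pow V \<times> Pow V \<times> Pow V" using key_in[of V u] by blast
    ultimately show "s \<in> S" using key_in[of V u u] by (simp add: S_def)
  qed
  then have f1: "finite (sig ` {u. prime_th u})" using finS finite_subset by blast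
  have "TV V ` {u. prime_th u} \<subseteq> g ` (sig ` {u. prime_th u})"
  proof
    fix t assume "t \<in> TV V ` {u. prime_th u}"
    then obtain u where u: "prime_th u" "t = TV V u" by auto
    define u' where "u' = (SOME u'. prime_th u' \<and> sig u' = sig u)"
    have "prime_th u' \<and> sig u' = sig u" unfolding u'_def by (rule someI[of _ u]) (simp add: u)
    then have "TV V u' = TV V u" using sig_TV[of u' u V] u by (simp add: sig_def)
    then have "g (sig u) = t" using u by (simp add: g_def u'_def)
    then show "t \<in> g ` (sig ` {u. prime_th u})" using u by blast
  qed
  then show ?thesis using f1 finite_subset by blast
qed

lemma LT: "locally_tabular wPL"
  unfolding locally_tabular_def
proof (intro allI impI)
  fix V :: "nat set" assume fin: "finite V"
  define Th where "Th = TV V ` {u. prime_th u}"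
  have finTh: "finite Th" using finite_TV[OF fin] Th_def by simp
  define h where "h a = {t \<in> Th. a \<in> t}" for a
  define R where "R = {(a, b). vars a \<subseteq> V \<and> vars b \<subseteq> V \<and> equiv_in wPL a b}"
  have dir: "L (Imp a b)" if "vars a \<subseteq> V" "vars b \<subseteq> V" "h a \<subseteq> h b" for a b
  proof (rule ccontr)
    assume "\<not> L (Imp a b)"
    then have "\<not> ded {a} b" using deduction ded_empty by blast
    then obtain D where D: "{a} \<subseteq> D" "prime_th D" "b \<notin> D" using lindenbaum by blast
    have "TV V D \<in> Th" using D Th_def by blast
    then have "TV V D \<in> h a" using D that by (auto simp: h_def TV_def)
    moreover have "TV V D \<notin> h b" using D by (auto simp: h_def TV_def)
    ultimately show False using that by blast
  qed
  have dir2: "h a \<subseteq> h b" if "vars a \<subseteq> V" "vars b \<subseteq> V" "L (Imp a b)" for a b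
  proof
    fix t assume "t \<in> h a"
    then obtain u where u: "prime_th u" "t = TV V u" "a \<in> TV V u" by (auto simp: h_def Th_def)
    then have "b \<in> u" using prime_L[OF u(1) that(3)] prime_mp by (auto simp: TV_def)
    then show "t \<in> h b" using u that \<open>t \<in> h a\<close> by (auto simp: h_def TV_def)
  qed
  have keyeq: "equiv_in wPL a b \<longleftrightarrow> h a = h b" if "vars a \<subseteq> V" "vars b \<subseteq> V" for a b
    using dir[OF that] dir[OF that(2,1)] dir2[OF that] dir2[OF that(2,1)]
    by (auto simp: equiv_in_def wPL_def)
  have "{a. vars a \<subseteq> V} // R \<subseteq> (\<lambda>H. {b. vars b \<subseteq> V \<and> h b = H}) ` Pow Th"
  proof
    fix X assume "X \<in> {a. vars a \<subseteq> V} // R"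
    then obtain a where a: "vars a \<subseteq> V" "X = R `` {a}" by (auto simp: quotient_def)
    then have "X = {b. vars b \<subseteq> V \<and> h b = h a}" using keyeq by (auto simp: R_def)
    moreover have "h a \<in> Pow Th" by (auto simp: h_def)
    ultimately show "X \<in> (\<lambda>H. {b. vars b \<subseteq> V \<and> h b = H}) ` Pow Th" by blast
  qed
  then show "finite ({a. vars a \<subseteq> V} // {(a, b). vars a \<subseteq> V \<and> vars b \<subseteq> V \<and> equiv_in wPL a b})"
    using finTh finite_subset R_def by fastforce
qed


declare split_paired_All[simp del] split_paired_Ex[simp del]

definition Rw :: "nat \<times> bool \<Rightarrow> nat \<times> bool \<Rightarrow> bool" where
  "Rw x y \<longleftrightarrow> x = y \<or> fst y < fst x"

definition Vw :: "nat \<times> bool \<Rightarrow> nat \<Rightarrow> bool" where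
  "Vw x m \<longleftrightarrow> (if snd x then fst x \<le> m else fst x < m)"

fun sem :: "nat \<times> bool \<Rightarrow> fm \<Rightarrow> bool" where
  "sem w (Var n) = Vw w n"
| "sem w Bot = False"
| "sem w Top = True"
| "sem w (Conj a b) = (sem w a \<and> sem w b)"
| "sem w (Disj a b) = (sem w a \<or> sem w b)"
| "sem w (Imp a b) = (\<forall>v. Rw w v \<longrightarrow> sem v a \<longrightarrow> sem v b)"

lemma Rw_refl: "Rw x x" by (simp add: Rw_def)
lemma Rw_trans: "Rw x y \<Longrightarrow> Rw y z \<Longrightarrow> Rw x z" by (auto simp: Rw_def)

lemma persist: "Rw w v \<Longrightarrow> sem w a \<Longrightarrow> sem v a"
proof (induction a arbitrary: w v)
  case (Var n) then show ?case by (auto simp: Rw_def Vw_def split: if_splits)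
next
  case (Imp a b) then show ?case using Rw_trans by (metis sem.simps(6))
qed auto

lemma sound_wpl: "sem w (Disj (Imp q p) (Imp (Imp (Imp p q) p) p))"
proof (rule ccontr)
  assume "\<not> ?thesis"
  then obtain x z where x: "Rw w x" "sem x q" "\<not> sem x p"
    and z: "Rw w z" "sem z (Imp (Imp p q) p)" "\<not> sem z p" by auto
  have "\<not> sem z (Imp p q)" using z(2,3) Rw_refl[of z] by auto
  then obtain y where y: "Rw z y" "sem y p" "\<not> sem y q" by auto
  have zy: "fst y < fst z" using y z by (auto simp: Rw_def)
  have "\<not> Rw z x"
  proof
    assume "Rw z x"
    then have "sem x (Imp (Imp p q) p)" using persist z by blast
    then have "\<not> sem x (Imp p q)" using x Rw_refl[of x] by auto
    then obtain v where "Rw x v" "sem v p" "\<not> sem v q" by auto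
    then show False using persist x by blast
  qed
  then have "fst z \<le> fst x" by (auto simp: Rw_def)
  then have "Rw x y" using zy by (simp add: Rw_def)
  then show False using persist x y by blast
qed

lemma soundness: "L a \<Longrightarrow> sem w a"
proof (induction arbitrary: w rule: derivable.induct)
  case (ax1 A B) then show ?case using persist by auto
next
  case (ax2 A B C) then show ?case using Rw_trans Rw_refl by (simp; metis)
next
  case (ax8 A C B) then show ?case using Rw_trans by (simp; metis)
next
  case (extra \<phi> s)
  then show ?case using sound_wpl by (simp add: wPL_axiom_def Let_def)
next
  case (mp A B) then show ?case using mp.IH(1)[of w] mp.IH(2)[of w] Rw_refl[of w] by auto
qed (auto intro: Rw_refl dest: persist)

fun Dn :: "nat \<Rightarrow> fm" where
  "Dn 0 = Disj (Var 0) (Imp (Var 0) Bot)"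
| "Dn (Suc n) = Disj (Var (Suc n)) (Imp (Var (Suc n)) (Dn n))"

lemma idepth_Dn: "idepth (Dn n) = Suc n"
  by (induction n) auto

lemma sem_Dn: "sem w (Dn n) \<longleftrightarrow> fst w \<le> n"
proof (induction n arbitrary: w)
  case 0
  obtain l b where w: "w = (l, b)" by fastforce
  show ?case by (cases b) (auto simp: w Rw_def Vw_def dest: spec[of _ "(0,True)"])
next
  case (Suc n)
  obtain l b where w: "w = (l, b)" by fastforce
  have "sem w (Imp (Var (Suc n)) (Dn n)) \<longleftrightarrow> \<not> Rw w (Suc n, True)"
    using Suc by (auto simp: Rw_def Vw_def w split: if_splits dest: spec[of _ "(Suc n, True)"])
  then show ?case by (cases b) (auto simp: w Rw_def Vw_def)
qed

lemma agree: "idepth a \<le> k \<Longrightarrow> k \<le> l \<Longrightarrow> (sem (l, False) a \<longleftrightarrow> sem (Suc l, True) a)"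
proof (induction a arbitrary: k l)
  case (Var n) then show ?case by (auto simp: Vw_def)
next
  case (Imp a b)
  obtain k' where k: "k = Suc k'" using Imp.prems by (cases k) auto
  have da: "idepth a \<le> k'" "idepth b \<le> k'" using Imp.prems k by auto
  have IHa: "sem (l, False) a \<longleftrightarrow> sem (Suc l, True) a" using Imp.IH(1)[OF da(1)] Imp.prems k by simp
  have IHb: "sem (l, False) b \<longleftrightarrow> sem (Suc l, True) b" using Imp.IH(2)[OF da(2)] Imp.prems k by simp
  obtain l' where l: "l = Suc l'" using Imp.prems k by (cases l) auto
  have IHa': "sem (l', False) a \<longleftrightarrow> sem (l, True) a" using Imp.IH(1)[OF da(1)] Imp.prems k l by simp
  have IHb': "sem (l', False) b \<longleftrightarrow> sem (l, True) b" using Imp.IH(2)[OF da(2)] Imp.prems k l by simp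
  have succ: "Rw (Suc l, True) v \<longleftrightarrow> v = (Suc l, True) \<or> v = (l, True) \<or> Rw (l, False) v" for v
    by (cases v) (auto simp: Rw_def)
  have l'F: "Rw (l, False) (l', False)" using l by (simp add: Rw_def)
  show ?case
  proof
    assume H: "sem (l, False) (Imp a b)"
    show "sem (Suc l, True) (Imp a b)"
    proof (simp only: sem.simps, intro allI impI)
      fix v assume v: "Rw (Suc l, True) v" "sem v a"
      then consider "v = (Suc l, True)" | "v = (l, True)" | "Rw (l, False) v" using succ by blast
      then show "sem v b"
      proof cases
        case 1 then show ?thesis using H v IHa IHb Rw_refl by auto
      next
        case 2 then show ?thesis using H v IHa' IHb' l'F by auto
      next
        case 3 then show ?thesis using H v by auto
      qed
    qed
  next
    assume H: "sem (Suc l, True) (Imp a b)"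
    then show "sem (l, False) (Imp a b)" using succ by auto
  qed
qed auto

lemma not_ULT: "\<not> uniformly_locally_tabular wPL"
proof
  assume "uniformly_locally_tabular wPL"
  then obtain n where "n_uniform wPL n" by (auto simp: uniformly_locally_tabular_def)
  then obtain b where b: "idepth b \<le> n" "L (Imp (Dn n) b)" "L (Imp b (Dn n))"
    by (auto simp: n_uniform_def equiv_in_def wPL_def)
  have "sem (n, False) (Dn n)" by (simp add: sem_Dn)
  then have "sem (n, False) b" using soundness[OF b(2), of "(n,False)"] Rw_refl[of "(n,False)"] by auto
  then have "sem (Suc n, True) b" using agree[OF b(1)] by simp
  then have "sem (Suc n, True) (Dn n)" using soundness[OF b(3), of "(Suc n,True)"] Rw_refl[of "(Suc n,True)"] by auto
  then show False by (simp add: sem_Dn)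
qed

theorem mainTheorem13:
  shows "locally_tabular wPL \<and> \<not> uniformly_locally_tabular wPL"
  using LT not_ULT by blast

end
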